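(* Every quantifier-free formula in the signature $\{\cup,\cap,\bot,c_0,\min,\max,\mathrm{ips}\}$ is equivalent in the structure $\mathcal{W}(I)$ to a positive existential formula in the same signature.
   Context: Let $I$ be a dense linear order with left endpoint $0$ and no right endpoint. $\mathcal{W}(I)$ is the structure whose universe is the set $\mathcal{P}_{\mathrm{fin}}(I)$ of finite subsets of $I$, interpreted as follows. - $\cup$ and $\cap$ are union and intersection. - $\bot$ is $\emptyset$, and $c_0$ is $\{0\}$. - $\min$ and $\max$ send a nonempty finite set to the singleton of its minimum, respectively maximum, and both fix $\emptyset$. - $\mathrm{ips}$ is the binary function $\mathrm{ips}(A,B)=\{i\in A: s_A(i)\in B\}$, where $s_A$ is the successor function of the finite linear order $A$. A positive existential formula is one built from atomic formulas using only $\wedge$, $\vee$ and $\exists$. *)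

theory Defs
  imports Main
begin

datatype trm = Var nat | TUn trm trm | TInt trm trm | TBot | TC0 | TMin trm | TMax trm | TIps trm trm

datatype fm = Eq trm trm | Neg fm | Conj fm fm | Disj fm fm | Ex nat fm | All nat fm

definition minset :: "'a::linorder set \<Rightarrow> 'a set" where
  "minset A = (if A = {} then {} else {Min A})"

definition maxset :: "'a::linorder set \<Rightarrow> 'a set" where
  "maxset A = (if A = {} then {} else {Max A})"

definition succ_in :: "'a::linorder set \<Rightarrow> 'a \<Rightarrow> 'a \<Rightarrow> bool" where
  "succ_in A i j \<longleftrightarrow> j \<in> A \<and> i < j \<and> (\<forall>k\<in>A. i < k \<longrightarrow> j \<le> k)"

definition ips :: "'a::linorder set \<Rightarrow> 'a set \<Rightarrow> 'a set" where
  "ips A B = {i \<in> A. \<exists>j. succ_in A i j \<and> j \<in> B}"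

text \<open>Interpretation in W(I): the left endpoint 0 of I is bot.\<close>
primrec evalt :: "(nat \<Rightarrow> 'a::{linorder,order_bot} set) \<Rightarrow> trm \<Rightarrow> 'a set" where
  "evalt v (Var n) = v n"
| "evalt v (TUn s t) = evalt v s \<union> evalt v t"
| "evalt v (TInt s t) = evalt v s \<inter> evalt v t"
| "evalt v TBot = {}"
| "evalt v TC0 = {bot}"
| "evalt v (TMin t) = minset (evalt v t)"
| "evalt v (TMax t) = maxset (evalt v t)"
| "evalt v (TIps s t) = ips (evalt v s) (evalt v t)"

primrec sat :: "(nat \<Rightarrow> 'a::{linorder,order_bot} set) \<Rightarrow> fm \<Rightarrow> bool" where
  "sat v (Eq s t) = (evalt v s = evalt v t)"
| "sat v (Neg f) = (\<not> sat v f)"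
| "sat v (Conj f g) = (sat v f \<and> sat v g)"
| "sat v (Disj f g) = (sat v f \<or> sat v g)"
| "sat v (Ex n f) = (\<exists>A. finite A \<and> sat (v(n := A)) f)"
| "sat v (All n f) = (\<forall>A. finite A \<longrightarrow> sat (v(n := A)) f)"

primrec qfree :: "fm \<Rightarrow> bool" where
  "qfree (Eq s t) = True"
| "qfree (Neg f) = qfree f"
| "qfree (Conj f g) = (qfree f \<and> qfree g)"
| "qfree (Disj f g) = (qfree f \<and> qfree g)"
| "qfree (Ex n f) = False"
| "qfree (All n f) = False"

primrec posex :: "fm \<Rightarrow> bool" where
  "posex (Eq s t) = True"
| "posex (Neg f) = False"
| "posex (Conj f g) = (posex f \<and> posex g)"
| "posex (Disj f g) = (posex f \<and> posex g)"
| "posex (Ex n f) = posex f"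
| "posex (All n f) = False"

end

theory Submission
  imports Defs
begin

primrec mv :: "trm \<Rightarrow> nat" where
  "mv (Var n) = n"
| "mv (TUn s t) = max (mv s) (mv t)"
| "mv (TInt s t) = max (mv s) (mv t)"
| "mv TBot = 0"
| "mv TC0 = 0"
| "mv (TMin t) = mv t"
| "mv (TMax t) = mv t"
| "mv (TIps s t) = max (mv s) (mv t)"

lemma evalt_upd: "mv t < n \<Longrightarrow> evalt (v(n := A)) t = evalt v t"
  by (induction t) auto

lemma evalt_finite: "(\<forall>n. finite (v n)) \<Longrightarrow> finite (evalt v t)"
  by (induction t) (auto simp: minset_def maxset_def ips_def)

definition nonempty :: "trm \<Rightarrow> fm" where
  "nonempty w = Disj (Eq (TInt TC0 w) TC0) (Eq (TInt TC0 (TIps (TUn TC0 w) w)) TC0)"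

lemma nonempty_iff:
  fixes z :: "'a::{linorder,order_bot} set"
  assumes "finite z"
  shows "({bot} \<inter> z = {bot} \<or> {bot} \<inter> ips ({bot} \<union> z) z = {bot}) \<longleftrightarrow> z \<noteq> {}"
proof
  assume "{bot} \<inter> z = {bot} \<or> {bot} \<inter> ips ({bot} \<union> z) z = {bot}"
  then show "z \<noteq> {}" by (auto simp: ips_def succ_in_def)
next
  assume ne: "z \<noteq> {}"
  show "{bot} \<inter> z = {bot} \<or> {bot} \<inter> ips ({bot} \<union> z) z = {bot}"
  proof (cases "bot \<in> z")
    case True then show ?thesis by auto
  next
    case False
    define m where "m = Min z"
    have mz: "m \<in> z" using ne assms by (simp add: m_def)
    have "m \<noteq> bot" using mz False by auto
    hence mb: "bot < m" by (simp add: bot_less)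
    have "succ_in ({bot} \<union> z) bot m"
      unfolding succ_in_def using mz mb assms m_def by auto
    then have "bot \<in> ips ({bot} \<union> z) z" using mz by (auto simp: ips_def)
    then show ?thesis by auto
  qed
qed

definition nsub :: "trm \<Rightarrow> trm \<Rightarrow> fm" where
  "nsub s t = (let z = Suc (max (mv s) (mv t)) in
     Ex z (Conj (Eq (TInt (Var z) s) (Var z)) (Conj (Eq (TInt (Var z) t) TBot) (nonempty (Var z)))))"

lemma nsub_sat:
  fixes v :: "nat \<Rightarrow> 'a::{linorder,order_bot} set"
  assumes "\<forall>n. finite (v n)"
  shows "sat v (nsub s t) \<longleftrightarrow> \<not> evalt v s \<subseteq> evalt v t"
proof -
  define z where "z = Suc (max (mv s) (mv t))"
  have es: "evalt (v(z := A)) s = evalt v s" for A by (rule evalt_upd) (simp add: z_def)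
  have et: "evalt (v(z := A)) t = evalt v t" for A by (rule evalt_upd) (simp add: z_def)
  have "sat v (nsub s t) \<longleftrightarrow> (\<exists>A. finite A \<and> A \<inter> evalt v s = A \<and> A \<inter> evalt v t = {} \<and>
        ({bot} \<inter> A = {bot} \<or> {bot} \<inter> ips ({bot} \<union> A) A = {bot}))"
    by (simp add: nsub_def Let_def nonempty_def es et z_def[symmetric])
  also have "\<dots> \<longleftrightarrow> (\<exists>A. finite A \<and> A \<subseteq> evalt v s \<and> A \<inter> evalt v t = {} \<and> A \<noteq> {})"
  proof (intro iffI; elim exE conjE)
    fix A assume h: "finite A" "A \<inter> evalt v s = A" "A \<inter> evalt v t = {}"
      "{bot} \<inter> A = {bot} \<or> {bot} \<inter> ips ({bot} \<union> A) A = {bot}"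
    have "A \<noteq> {}" using nonempty_iff[OF h(1)] h(4) by blast
    moreover have "A \<subseteq> evalt v s" using h(2) by blast
    ultimately show "\<exists>A. finite A \<and> A \<subseteq> evalt v s \<and> A \<inter> evalt v t = {} \<and> A \<noteq> {}"
      using h by blast
  next
    fix A assume h: "finite A" "A \<subseteq> evalt v s" "A \<inter> evalt v t = {}" "A \<noteq> {}"
    have "{bot} \<inter> A = {bot} \<or> {bot} \<inter> ips ({bot} \<union> A) A = {bot}"
      using nonempty_iff[OF h(1)] h(4) by blast
    moreover have "A \<inter> evalt v s = A" using h(2) by blast
    ultimately show "\<exists>A. finite A \<and> A \<inter> evalt v s = A \<and> A \<inter> evalt v t = {} \<and>
        ({bot} \<inter> A = {bot} \<or> {bot} \<inter> ips ({bot} \<union> A) A = {bot})"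
      using h by blast
  qed
  also have "\<dots> \<longleftrightarrow> \<not> evalt v s \<subseteq> evalt v t"
  proof
    assume "\<exists>A. finite A \<and> A \<subseteq> evalt v s \<and> A \<inter> evalt v t = {} \<and> A \<noteq> {}"
    then show "\<not> evalt v s \<subseteq> evalt v t" by blast
  next
    assume "\<not> evalt v s \<subseteq> evalt v t"
    then obtain x where "x \<in> evalt v s" "x \<notin> evalt v t" by blast
    then show "\<exists>A. finite A \<and> A \<subseteq> evalt v s \<and> A \<inter> evalt v t = {} \<and> A \<noteq> {}"
      by (intro exI[of _ "{x}"]) auto
  qed
  finally show ?thesis .
qed

definition neq :: "trm \<Rightarrow> trm \<Rightarrow> fm" where
  "neq s t = Disj (nsub s t) (nsub t s)"

fun tr :: "bool \<Rightarrow> fm \<Rightarrow> fm" where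
  "tr True (Eq s t) = Eq s t"
| "tr False (Eq s t) = neq s t"
| "tr p (Neg f) = tr (\<not> p) f"
| "tr True (Conj f g) = Conj (tr True f) (tr True g)"
| "tr False (Conj f g) = Disj (tr False f) (tr False g)"
| "tr True (Disj f g) = Disj (tr True f) (tr True g)"
| "tr False (Disj f g) = Conj (tr False f) (tr False g)"
| "tr p (Ex n f) = Eq TBot TBot"
| "tr p (All n f) = Eq TBot TBot"

lemma tr_posex: "posex (tr p f)"
  by (induction p f rule: tr.induct) (auto simp: neq_def nsub_def nonempty_def Let_def)

lemma tr_sat:
  fixes v :: "nat \<Rightarrow> 'a::{linorder,order_bot} set"
  assumes "\<forall>n. finite (v n)"
  shows "qfree f \<Longrightarrow> sat v (tr p f) \<longleftrightarrow> (sat v f = p)"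
  by (induction p f rule: tr.induct) (auto simp: neq_def nsub_sat[OF assms])

theorem proposition3p5:
  fixes \<phi> :: fm
  assumes "qfree \<phi>"
  shows "\<exists>\<psi>. posex \<psi> \<and>
           (\<forall>v :: nat \<Rightarrow> 'a::{dense_linorder, order_bot, no_top} set.
              (\<forall>n. finite (v n)) \<longrightarrow> (sat v \<phi> \<longleftrightarrow> sat v \<psi>))"
proof (intro exI[of _ "tr True \<phi>"] conjI allI impI)
  show "posex (tr True \<phi>)" by (rule tr_posex)
next
  fix v :: "nat \<Rightarrow> 'a::{dense_linorder, order_bot, no_top} set"
  assume "\<forall>n. finite (v n)"
  from tr_sat[OF this assms, of True] show "sat v \<phi> \<longleftrightarrow> sat v (tr True \<phi>)" by simp
qed

end
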